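(* Let $G_m$ be a chain hexagonal cactus of length $m\ge 2$ with hexagons $h_1,\dots,h_m$ ordered along the chain (consecutive hexagons share a cut-vertex, $h_1$ and $h_m$ terminal). Let $c$ be the cut-vertex shared by $h_{m-1}$ and $h_m$, and label the vertices of $h_{m-1}$ as $a,b,c,i,j,k$ so that its edges are $ab,bc,ci,ij,jk,ka$. Let $H_{m-1}$ be the subgraph of $G_m$ induced by the vertices of $h_1,\dots,h_{m-1}$. Then at least one of the following holds: (i) $2\,\Psi(H_{m-1}-\{b,c\})\ge \Psi(H_{m-1}-c)$; (ii) $2\,\Psi(H_{m-1}-\{c,i\})\ge \Psi(H_{m-1}-c)$.
   Context: A matching of a graph is a set of pairwise vertex-disjoint edges; it is maximal if it is not a proper subset of another matching. $\Psi(G)$ is the number of maximal matchings of $G$. For a vertex set $S$, $G-S$ (or $G-v$ when $S=\{v\}$) is the graph obtained by deleting the vertices of $S$ and all incident edges. A chain hexagonal cactus is a connected graph all of whose blocks are 6-cycles (hexagons), in which each hexagon has at most two cut-vertices and each cut-vertex lies in exactly two hexagons; its length is its number of hexagons; terminal hexagons are those with exactly one cut-vertex. *)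

theory Defs
  imports Main
begin

type_synonym 'a graph = "'a set \<times> 'a set set"

definition verts :: "'a graph \<Rightarrow> 'a set" where "verts G = fst G"
definition edges :: "'a graph \<Rightarrow> 'a set set" where "edges G = snd G"

definition matching :: "'a graph \<Rightarrow> 'a set set \<Rightarrow> bool" where
  "matching G M \<longleftrightarrow> M \<subseteq> edges G \<and> (\<forall>e\<in>M. \<forall>f\<in>M. e \<noteq> f \<longrightarrow> e \<inter> f = {})"

definition maximal_matching :: "'a graph \<Rightarrow> 'a set set \<Rightarrow> bool" where
  "maximal_matching G M \<longleftrightarrow> matching G M \<and> \<not> (\<exists>M'. matching G M' \<and> M \<subset> M')"

definition Psi :: "'a graph \<Rightarrow> nat" where
  "Psi G = card {M. maximal_matching G M}"

definition del_verts :: "'a graph \<Rightarrow> 'a set \<Rightarrow> 'a graph" where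
  "del_verts G S = (verts G - S, {e \<in> edges G. e \<inter> S = {}})"

definition induced :: "'a graph \<Rightarrow> 'a set \<Rightarrow> 'a graph" where
  "induced G W = (verts G \<inter> W, {e \<in> edges G. e \<subseteq> W})"

definition hex_edges :: "'a list \<Rightarrow> 'a set set" where
  "hex_edges h = {{h ! t, h ! ((t + 1) mod 6)} | t. t < 6}"

text \<open>G is a chain hexagonal cactus whose hexagons, in order along the chain, are
  hs!0, ..., hs!(length hs - 1): every block is one of these hexagons, consecutive
  hexagons share exactly one (cut-)vertex, non-consecutive hexagons are disjoint
  (hence each hexagon has at most two cut-vertices, each cut-vertex lies in exactly
  two hexagons, and hs!0, hs!(m-1) are the terminal hexagons).\<close>
definition chain_hex_cactus :: "'a graph \<Rightarrow> 'a list list \<Rightarrow> bool" where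
  "chain_hex_cactus G hs \<longleftrightarrow>
     hs \<noteq> [] \<and>
     (\<forall>h\<in>set hs. length h = 6 \<and> distinct h) \<and>
     verts G = (\<Union>h\<in>set hs. set h) \<and>
     edges G = (\<Union>h\<in>set hs. hex_edges h) \<and>
     (\<forall>p q. p < q \<and> q < length hs \<longrightarrow>
        card (set (hs ! p) \<inter> set (hs ! q)) = (if q = p + 1 then 1 else 0))"

end

theory Submission
  imports Defs
begin

definition disj :: "'a set set \<Rightarrow> bool" where
  "disj M \<longleftrightarrow> (\<forall>e\<in>M. \<forall>f\<in>M. e \<noteq> f \<longrightarrow> e \<inter> f = {})"

lemma disj_insert: "disj (insert x M) \<longleftrightarrow> disj M \<and> (\<forall>f\<in>M. f \<noteq> x \<longrightarrow> x \<inter> f = {})"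
  unfolding disj_def by blast

lemma disj_mono: "N \<subseteq> M \<Longrightarrow> disj M \<Longrightarrow> disj N"
  unfolding disj_def by blast

lemma disjD: "disj M \<Longrightarrow> e \<in> M \<Longrightarrow> f \<in> M \<Longrightarrow> e \<noteq> f \<Longrightarrow> e \<inter> f = {}"
  unfolding disj_def by blast

lemma mm_iff: "maximal_matching G M \<longleftrightarrow> M \<subseteq> edges G \<and> disj M
   \<and> \<not>(\<exists>M'. M' \<subseteq> edges G \<and> disj M' \<and> M \<subset> M')"
  by (simp add: maximal_matching_def matching_def disj_def)

lemma edges_del: "edges (del_verts G S) = {e\<in>edges G. e \<inter> S = {}}"
  by (simp add: del_verts_def edges_def)

lemma key:
  fixes G :: "'a graph"
  assumes fin: "finite (edges G)" and ab: "{a,b} \<in> edges G" and neq: "a \<noteq> b"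
    and only: "\<forall>e\<in>edges G. b \<in> e \<longrightarrow> e = {a,b}"
  shows "Psi G \<le> 2 * Psi (del_verts G {b})"
proof -
  define E where "E = edges G"
  have abE: "{a,b} \<in> E" using ab E_def by simp
  have onlyE: "\<And>e. e \<in> E \<Longrightarrow> b \<in> e \<Longrightarrow> e = {a,b}" using only E_def by simp
  define G1 where "G1 = del_verts G {b}"
  define G2 where "G2 = del_verts G {a,b}"
  have e1: "edges G1 = {e\<in>E. b\<notin>e}" unfolding G1_def edges_del E_def by auto
  have e2: "edges G2 = {e\<in>E. a\<notin>e \<and> b\<notin>e}" unfolding G2_def edges_del E_def by auto
  define MM where "MM H = {M. maximal_matching H M}" for H :: "'a graph"
  have finMM: "finite (MM H)" if "finite (edges H)" for H :: "'a graph"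
    by (rule finite_subset[of _ "Pow (edges H)"]) (auto simp: MM_def mm_iff that)
  have fin1: "finite (MM G1)" using fin by (intro finMM) (simp add: e1 E_def)
  have fin2: "finite (MM G2)" using fin by (intro finMM) (simp add: e2 E_def)
  define Cov where "Cov = {M\<in>MM G1. \<exists>e\<in>M. a\<in>e}"
  have s1: "MM G \<subseteq> insert {a,b} ` MM G2 \<union> Cov"
  proof
    fix M assume "M \<in> MM G"
    hence sub: "M \<subseteq> E" and pw: "disj M"
      and mx: "\<And>M'. M' \<subseteq> E \<Longrightarrow> disj M' \<Longrightarrow> M \<subset> M' \<Longrightarrow> False"
      unfolding MM_def mm_iff E_def by auto
    show "M \<in> insert {a,b} ` MM G2 \<union> Cov"
    proof (cases "{a,b} \<in> M")
      case True
      define M2 where "M2 = M - {{a,b}}"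
      have MM2: "M = insert {a,b} M2" using True M2_def by auto
      have ab2: "a \<notin> e \<and> b \<notin> e" if "e \<in> M2" for e
      proof -
        from that have "e \<in> M" "e \<noteq> {a,b}" by (auto simp: M2_def)
        hence "e \<inter> {a,b} = {}" using disjD[OF pw] True by metis
        thus ?thesis by auto
      qed
      have "M2 \<in> MM G2"
        unfolding MM_def mm_iff e2
      proof (intro CollectI conjI)
        show "M2 \<subseteq> {e \<in> E. a \<notin> e \<and> b \<notin> e}" using ab2 sub M2_def by auto
        show "disj M2" using pw M2_def disj_mono by (metis Diff_subset)
        show "\<not> (\<exists>M'\<subseteq>{e \<in> E. a \<notin> e \<and> b \<notin> e}. disj M' \<and> M2 \<subset> M')"
        proof
          assume "\<exists>M'\<subseteq>{e \<in> E. a \<notin> e \<and> b \<notin> e}. disj M' \<and> M2 \<subset> M'"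
          then obtain N where N: "N \<subseteq> {e \<in> E. a \<notin> e \<and> b \<notin> e}" "disj N" "M2 \<subset> N"
            by blast
          have "insert {a,b} N \<subseteq> E" using N(1) abE by auto
          moreover have "disj (insert {a,b} N)"
            using N(1,2) by (auto simp: disj_insert)
          moreover have "M \<subset> insert {a,b} N" using N(1,3) MM2 by auto
          ultimately show False using mx by blast
        qed
      qed
      thus ?thesis using MM2 by blast
    next
      case False
      have nb: "b \<notin> e" if "e \<in> M" for e using False onlyE sub that by auto
      have "M \<in> MM G1" unfolding MM_def mm_iff e1
      proof (intro CollectI conjI)
        show "M \<subseteq> {e \<in> E. b \<notin> e}" using nb sub by auto
        show "disj M" by (rule pw)
        show "\<not> (\<exists>M'\<subseteq>{e \<in> E. b \<notin> e}. disj M' \<and> M \<subset> M')"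
          using mx by blast
      qed
      moreover have "\<exists>e\<in>M. a\<in>e"
      proof (rule ccontr)
        assume na: "\<not> (\<exists>e\<in>M. a\<in>e)"
        have "insert {a,b} M \<subseteq> E" using sub abE by auto
        moreover have "disj (insert {a,b} M)"
          using pw na nb by (auto simp: disj_insert)
        moreover have "M \<subset> insert {a,b} M" using False by auto
        ultimately show False using mx by blast
      qed
      ultimately show ?thesis unfolding Cov_def by blast
    qed
  qed
  have s2: "MM G2 \<subseteq> (\<lambda>N. {e\<in>N. a\<notin>e}) ` MM G1"
  proof
    fix M assume "M \<in> MM G2"
    hence sub: "M \<subseteq> {e\<in>E. a\<notin>e \<and> b\<notin>e}" and pw: "disj M"
      and mx: "\<And>M'. M' \<subseteq> {e\<in>E. a\<notin>e \<and> b\<notin>e} \<Longrightarrow> disj M' \<Longrightarrow> M \<subset> M' \<Longrightarrow> False"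
      unfolding MM_def mm_iff e2 by auto
    have same: "{e\<in>M. a\<notin>e} = M" using sub by auto
    show "M \<in> (\<lambda>N. {e\<in>N. a\<notin>e}) ` MM G1"
    proof (cases "M \<in> MM G1")
      case True thus ?thesis using same by (metis (no_types, lifting) image_eqI)
    next
      case False
      have "M \<subseteq> {e\<in>E. b\<notin>e}" using sub by auto
      with False pw obtain N where N: "N \<subseteq> {e\<in>E. b\<notin>e}" "disj N" "M \<subset> N"
        unfolding MM_def mm_iff e1 by auto
      then obtain e where e: "e \<in> N" "e \<notin> M" by auto
      have sN: "insert e M \<subseteq> N" using N(3) e by auto
      have ae: "a \<in> e"
      proof (rule ccontr)
        assume "a \<notin> e"
        hence "insert e M \<subseteq> {e\<in>E. a\<notin>e \<and> b\<notin>e}" using sub N(1) e by auto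
        moreover have "disj (insert e M)" using disj_mono[OF sN N(2)] .
        moreover have "M \<subset> insert e M" using e by auto
        ultimately show False using mx by blast
      qed
      have "insert e M \<in> MM G1" unfolding MM_def mm_iff e1
      proof (intro CollectI conjI)
        show "insert e M \<subseteq> {e \<in> E. b \<notin> e}" using N(1) sN by auto
        show "disj (insert e M)" using disj_mono[OF sN N(2)] .
        show "\<not> (\<exists>M'\<subseteq>{e \<in> E. b \<notin> e}. disj M' \<and> insert e M \<subset> M')"
        proof
          assume "\<exists>M'\<subseteq>{e \<in> E. b \<notin> e}. disj M' \<and> insert e M \<subset> M'"
          then obtain K where K: "K \<subseteq> {e \<in> E. b \<notin> e}" "disj K" "insert e M \<subset> K"
            by blast
          then obtain f where f: "f \<in> K" "f \<notin> insert e M" by auto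
          have "e \<in> K" using K(3) by auto
          hence "f \<inter> e = {}" using disjD[OF K(2) f(1)] f(2) by auto
          hence "a \<notin> f" using ae by auto
          hence "insert f M \<subseteq> {e\<in>E. a\<notin>e \<and> b\<notin>e}" using sub K(1) f by auto
          moreover have "disj (insert f M)" using K(2,3) f disj_mono[of "insert f M" K] by auto
          moreover have "M \<subset> insert f M" using f by auto
          ultimately show False using mx by blast
        qed
      qed
      moreover have "M = (\<lambda>N. {e\<in>N. a\<notin>e}) (insert e M)" using ae same by auto
      ultimately show ?thesis by (rule image_eqI[rotated])
    qed
  qed
  have "card (MM G) \<le> card (insert {a,b} ` MM G2 \<union> Cov)"
    using s1 fin2 fin1 by (intro card_mono) (auto simp: Cov_def)
  also have "\<dots> \<le> card (insert {a,b} ` MM G2) + card Cov" by (rule card_Un_le)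
  also have "\<dots> \<le> card (MM G2) + card Cov" using card_image_le fin2 by auto
  also have "card (MM G2) \<le> card (MM G1)"
    using s2 fin1 by (meson card_image_le card_mono finite_imageI le_trans)
  also have "card Cov \<le> card (MM G1)" using fin1 by (intro card_mono) (auto simp: Cov_def)
  finally show ?thesis unfolding Psi_def MM_def G1_def by simp
qed

lemma hex_img: "hex_edges h = (\<lambda>t. {h ! t, h ! ((t + 1) mod 6)}) ` {..<6}"
  by (auto simp: hex_edges_def)

lemma hex_fin: "finite (hex_edges h)" by (simp add: hex_img)

lemma hex_sub: "length h = 6 \<Longrightarrow> e \<in> hex_edges h \<Longrightarrow> e \<subseteq> set h"
  by (auto simp: hex_edges_def)

lemma card1_two: "finite S \<Longrightarrow> card S = 1 \<Longrightarrow> x \<in> S \<Longrightarrow> y \<in> S \<Longrightarrow> x = y"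
  by (metis card_1_singletonE singletonD)

theorem lemma3p11:
  fixes G :: "'a graph" and hs :: "'a list list" and m :: nat
    and a b c i j k :: 'a
  assumes cactus: "chain_hex_cactus G hs"
    and len: "length hs = m" and m2: "m \<ge> 2"
    and c_cut: "c \<in> set (hs ! (m - 2)) \<inter> set (hs ! (m - 1))"
    and lab_dist: "distinct [a, b, c, i, j, k]"
    and lab: "hex_edges (hs ! (m - 2)) = {{a, b}, {b, c}, {c, i}, {i, j}, {j, k}, {k, a}}"
  shows "(let H = induced G (\<Union>h\<in>set (take (m - 1) hs). set h) in
          2 * Psi (del_verts H {b, c}) \<ge> Psi (del_verts H {c})
        \<or> 2 * Psi (del_verts H {c, i}) \<ge> Psi (del_verts H {c}))"
proof -
  have hl: "\<And>h. h \<in> set hs \<Longrightarrow> length h = 6 \<and> distinct h"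
    and Ed: "edges G = (\<Union>h\<in>set hs. hex_edges h)"
    and inter: "\<And>p q. p < q \<Longrightarrow> q < length hs \<Longrightarrow>
        card (set (hs ! p) \<inter> set (hs ! q)) = (if q = p + 1 then 1 else 0)"
    using cactus unfolding chain_hex_cactus_def by auto
  define W where "W = (\<Union>h\<in>set (take (m - 1) hs). set h)"
  define H where "H = induced G W"
  have eH: "edges H = {e \<in> edges G. e \<subseteq> W}"
    by (simp add: H_def induced_def edges_def)
  have finG: "finite (edges G)" unfolding Ed by (simp add: hex_fin)
  have mem2: "hs ! (m-2) \<in> set hs" using len m2 by simp
  have len2: "length (hs ! (m-2)) = 6" using hl mem2 by blast
  have memW: "hs ! (m-2) \<in> set (take (m - 1) hs)"
  proof -
    have "take (m - 1) hs ! (m-2) = hs ! (m-2)" using m2 by simp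
    moreover have "m - 2 < length (take (m - 1) hs)" using len m2 by simp
    ultimately show ?thesis by (metis nth_mem)
  qed
  have cW: "c \<in> set (hs ! (m-1))" using c_cut by blast
  have gen: "Psi (del_verts H {c}) \<le> 2 * Psi (del_verts H {x, c})"
    if xm: "m = 2 \<or> x \<notin> set (hs ! (m-3))" and yx: "{y,x} \<in> hex_edges (hs ! (m-2))"
      and "y \<noteq> c" "x \<noteq> c" "y \<noteq> x"
      and onl: "\<forall>e\<in>hex_edges (hs ! (m-2)). x \<in> e \<longrightarrow> c \<notin> e \<longrightarrow> e = {y,x}" for x y
  proof -
    have eq: "del_verts (del_verts H {c}) {x} = del_verts H {x, c}"
      by (auto simp: del_verts_def verts_def edges_def)
    have xin: "x \<in> set (hs ! (m-2))" using hex_sub[OF len2 yx] by auto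
    have k: "Psi (del_verts H {c}) \<le> 2 * Psi (del_verts (del_verts H {c}) {x})"
    proof (rule key)
      show "finite (edges (del_verts H {c}))" using finG by (simp add: edges_del eH)
      have "{y,x} \<in> edges G" using yx mem2 Ed by auto
      moreover have "{y,x} \<subseteq> W" using hex_sub[OF len2 yx] memW W_def by auto
      ultimately show "{y,x} \<in> edges (del_verts H {c})" using \<open>y \<noteq> c\<close> \<open>x \<noteq> c\<close>
        by (simp add: edges_del eH)
      show "y \<noteq> x" by fact
      show "\<forall>e\<in>edges (del_verts H {c}). x \<in> e \<longrightarrow> e = {y, x}"
      proof (intro ballI impI)
        fix e assume e: "e \<in> edges (del_verts H {c})" and xe: "x \<in> e"
        hence eG: "e \<in> edges G" and ce: "c \<notin> e" by (auto simp: edges_del eH)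
        then obtain p where p: "p < length hs" "e \<in> hex_edges (hs ! p)"
          unfolding Ed by (auto simp: in_set_conv_nth)
        have lp: "length (hs ! p) = 6" using hl p(1) by simp
        have xp: "x \<in> set (hs ! p)" using hex_sub[OF lp p(2)] xe by auto
        consider "p = m - 2" | "p = m - 1" | "p < m - 2" using p(1) len m2 by linarith
        thus "e = {y, x}"
        proof cases
          case 1 thus ?thesis using onl p(2) xe ce by blast
        next
          case 2
          have "card (set (hs ! (m-2)) \<inter> set (hs ! (m-1))) = 1"
            using inter[of "m-2" "m-1"] len m2 by simp
          hence "c = x" using card1_two[of _ c x] c_cut xin xp 2 by auto
          thus ?thesis using \<open>x \<noteq> c\<close> by simp
        next
          case 3
          have cd: "card (set (hs ! p) \<inter> set (hs ! (m-2))) = (if m - 2 = p + 1 then 1 else 0)"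
            using inter[of p "m-2"] 3 len m2 by simp
          show ?thesis
          proof (cases "m - 2 = p + 1")
            case True
            hence "p = m - 3" "m \<noteq> 2" using 3 by auto
            thus ?thesis using xm xp by simp
          next
            case False
            hence "set (hs ! p) \<inter> set (hs ! (m-2)) = {}" using cd by simp
            thus ?thesis using xp xin by blast
          qed
        qed
      qed
    qed
    thus ?thesis using eq by simp
  qed
  have abin: "{a,b} \<in> hex_edges (hs ! (m-2))" and ciin: "{c,i} \<in> hex_edges (hs ! (m-2))"
    using lab by auto
  have bmem: "b \<in> set (hs ! (m-2))" using hex_sub[OF len2 abin] by auto
  have imem: "i \<in> set (hs ! (m-2))" using hex_sub[OF len2 ciin] by auto
  have choice: "(m = 2 \<or> b \<notin> set (hs ! (m-3))) \<or> (m = 2 \<or> i \<notin> set (hs ! (m-3)))"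
  proof (rule ccontr)
    assume "\<not> ?thesis"
    hence "m \<noteq> 2" "b \<in> set (hs ! (m-3))" "i \<in> set (hs ! (m-3))" by auto
    moreover have "card (set (hs ! (m-3)) \<inter> set (hs ! (m-2))) = 1"
      using inter[of "m-3" "m-2"] len m2 \<open>m \<noteq> 2\<close> by (simp add: Suc_diff_Suc numeral_2_eq_2 numeral_3_eq_3)
    ultimately have "b = i" using card1_two[of _ b i] bmem imem by auto
    thus False using lab_dist by simp
  qed
  show ?thesis
  proof (cases "m = 2 \<or> b \<notin> set (hs ! (m-3))")
    case True
    have "Psi (del_verts H {c}) \<le> 2 * Psi (del_verts H {b, c})"
      by (rule gen[OF True abin]) (use lab_dist lab in auto)
    thus ?thesis unfolding Let_def H_def W_def by simp
  next
    case False
    hence F: "m = 2 \<or> i \<notin> set (hs ! (m-3))" using choice by blast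
    have ji: "{j,i} \<in> hex_edges (hs ! (m-2))" using lab by (auto simp: insert_commute)
    have "Psi (del_verts H {c}) \<le> 2 * Psi (del_verts H {i, c})"
      by (rule gen[OF F ji]) (use lab_dist lab in \<open>auto simp: insert_commute\<close>)
    thus ?thesis unfolding Let_def H_def W_def by (simp add: insert_commute)
  qed
qed

end
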